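(* A set system $H=(U,(A_1,\dots,A_m))$ is harmonic if and only if its complement $\overline H=(U,(U\setminus A_1,\dots,U\setminus A_m))$ is harmonic.
   Context: For $I\subseteq[m]$, $H_I=\bigcap_{i\in I}A_i$ ($=U$ if $I=\emptyset$). The run decomposition of a finite set $I$ of positive integers is the partition formed by the sizes, in nonincreasing order, of the maximal runs of consecutive integers in $I$. $H$ is harmonic if $|H_I|=|H_J|$ whenever $I,J\subseteq[m]$ have the same run decomposition. *)

theory Defs
  imports Main "HOL-Library.Multiset"
begin

text \<open>A set system H = (U, (A_1,...,A_m)) is given by a ground set U, a length m and
  a family A :: nat => 'a set, of which only A 1, ..., A m matter.\<close>

definition runs :: "nat set \<Rightarrow> nat set set" where
  "runs I = {{a..b} | a b. 1 \<le> a \<and> a \<le> b \<and> {a..b} \<subseteq> I \<and> a - 1 \<notin> I \<and> b + 1 \<notin> I}"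

definition run_decomp :: "nat set \<Rightarrow> nat multiset" where
  "run_decomp I = image_mset card (mset_set (runs I))"

definition H_int :: "'a set \<Rightarrow> (nat \<Rightarrow> 'a set) \<Rightarrow> nat set \<Rightarrow> 'a set" where
  "H_int U A I = (if I = {} then U else (\<Inter>i\<in>I. A i))"

definition harmonic :: "'a set \<Rightarrow> nat \<Rightarrow> (nat \<Rightarrow> 'a set) \<Rightarrow> bool" where
  "harmonic U m A \<longleftrightarrow>
     (\<forall>I J. I \<subseteq> {1..m} \<longrightarrow> J \<subseteq> {1..m} \<longrightarrow> run_decomp I = run_decomp J \<longrightarrow>
        card (H_int U A I) = card (H_int U A J))"

definition complement_system :: "'a set \<Rightarrow> (nat \<Rightarrow> 'a set) \<Rightarrow> nat \<Rightarrow> 'a set" where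
  "complement_system U A = (\<lambda>i. U - A i)"

end

theory Submission
  imports Defs
begin

lemma runs_mem: "R \<in> runs I \<longleftrightarrow> (\<exists>a b. R = {a..b} \<and> 1 \<le> a \<and> a \<le> b \<and> {a..b} \<subseteq> I \<and> a - 1 \<notin> I \<and> b + 1 \<notin> I)"
  by (auto simp: runs_def)

lemma runs_sub: "R \<in> runs I \<Longrightarrow> R \<subseteq> I"
  by (auto simp: runs_def)

lemma runs_exists:
  assumes "finite I" "x \<in> I" "0 \<notin> I"
  shows "\<exists>R\<in>runs I. x \<in> R"
proof -
  define SA where "SA = {a. a \<le> x \<and> {a..x} \<subseteq> I}"
  define SB where "SB = {b. x \<le> b \<and> {x..b} \<subseteq> I}"
  have fa: "finite SA" unfolding SA_def by auto
  have fb: "finite SB" unfolding SB_def using assms(1) by (rule rev_finite_subset) auto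
  have xa: "x \<in> SA" "x \<in> SB" using assms(2) by (auto simp: SA_def SB_def)
  define a where "a = Min SA"
  define b where "b = Max SB"
  have ne: "SA \<noteq> {}" "SB \<noteq> {}" using xa by blast+
  have aS: "a \<in> SA" using Min_in[OF fa ne(1)] unfolding a_def .
  have bS: "b \<in> SB" using Max_in[OF fb ne(2)] unfolding b_def .
  have sub: "{a..b} \<subseteq> I"
  proof
    fix y assume "y \<in> {a..b}" then have "y \<in> {a..x} \<or> y \<in> {x..b}" by auto
    moreover have "{a..x} \<subseteq> I" "{x..b} \<subseteq> I" using aS bS by (simp_all add: SA_def SB_def)
    ultimately show "y \<in> I" by blast
  qed
  have a1: "1 \<le> a" using aS assms(3) by (cases a) (auto simp: SA_def)
  have am: "a - 1 \<notin> I"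
  proof
    assume "a - 1 \<in> I"
    moreover have "{a - 1..x} = insert (a - 1) {a..x}" using a1 aS by (auto simp: SA_def)
    ultimately have "a - 1 \<in> SA" using aS by (auto simp: SA_def)
    then have "a \<le> a - 1" using fa unfolding a_def by simp
    then show False using a1 by simp
  qed
  have bm: "b + 1 \<notin> I"
  proof
    assume "b + 1 \<in> I"
    then have "b + 1 \<in> SB" using bS by (auto simp: SB_def) (metis atLeastAtMost_iff le_SucE subsetD)
    then have "b + 1 \<le> b" using fb unfolding b_def by simp
    then show False by simp
  qed
  have "a \<le> x" "x \<le> b" using aS bS by (auto simp: SA_def SB_def)
  then show ?thesis using sub a1 am bm by (auto simp: runs_mem intro!: bexI[of _ "{a..b}"])
qed

lemma runs_unique:
  assumes "R \<in> runs I" "R' \<in> runs I" "x \<in> R" "x \<in> R'"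
  shows "R = R'"
proof -
  obtain a b where R: "R = {a..b}" "1 \<le> a" "a \<le> b" "{a..b} \<subseteq> I" "a - 1 \<notin> I" "b + 1 \<notin> I"
    using assms(1) by (auto simp: runs_mem)
  obtain a' b' where R': "R' = {a'..b'}" "1 \<le> a'" "a' \<le> b'" "{a'..b'} \<subseteq> I" "a' - 1 \<notin> I" "b' + 1 \<notin> I"
    using assms(2) by (auto simp: runs_mem)
  have x: "a \<le> x" "x \<le> b" "a' \<le> x" "x \<le> b'" using assms R R' by auto
  have "a = a'"
  proof (rule ccontr)
    assume "a \<noteq> a'"
    then have "a < a' \<or> a' < a" by linarith
    then show False
    proof
      assume "a < a'" then have "a' - 1 \<in> {a..b}" using x by auto
      then show False using R R' by blast
    next
      assume "a' < a" then have "a - 1 \<in> {a'..b'}" using x by auto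
      then show False using R R' by blast
    qed
  qed
  moreover have "b = b'"
  proof (rule ccontr)
    assume "b \<noteq> b'"
    then have "b < b' \<or> b' < b" by linarith
    then show False
    proof
      assume "b < b'" then have "b + 1 \<in> {a'..b'}" using x by auto
      then show False using R R' by blast
    next
      assume "b' < b" then have "b' + 1 \<in> {a..b}" using x by auto
      then show False using R R' by blast
    qed
  qed
  ultimately show ?thesis using R R' by simp
qed

lemma runs_suc:
  assumes "R \<in> runs I" "x \<in> R" "Suc x \<in> I"
  shows "Suc x \<in> R"
  using assms by (auto simp: runs_mem) (metis Suc_eq_plus1 le_antisym not_less_eq_eq)

lemma runs_finite: "finite I \<Longrightarrow> finite (runs I)"
  by (rule finite_subset[of _ "Pow I"]) (auto simp: runs_def)

definition run_of :: "nat set \<Rightarrow> nat \<Rightarrow> nat set" where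
  "run_of I x = (THE R. R \<in> runs I \<and> x \<in> R)"

lemma run_of_eq: "R \<in> runs I \<Longrightarrow> x \<in> R \<Longrightarrow> run_of I x = R"
  unfolding run_of_def by (rule the_equality) (simp, metis runs_unique)

lemma run_of_in:
  assumes "finite I" "x \<in> I" "0 \<notin> I"
  shows "run_of I x \<in> runs I" "x \<in> run_of I x"
  using runs_exists[OF assms] run_of_eq by auto

lemma IE:
  fixes A :: "nat \<Rightarrow> 'a set"
  assumes "finite I"
  shows "finite W \<Longrightarrow> int (card (W \<inter> \<Inter>((\<lambda>i. - A i) ` I))) =
    (\<Sum>K\<in>Pow I. (-1) ^ card K * int (card (W \<inter> \<Inter>(A ` K))))"
  using assms
proof (induction I arbitrary: W rule: finite_induct)
  case empty
  then show ?case by simp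
next
  case (insert i I)
  have e1: "W \<inter> \<Inter>((\<lambda>i. - A i) ` insert i I) = (W \<inter> \<Inter>((\<lambda>i. - A i) ` I)) - ((W \<inter> A i) \<inter> \<Inter>((\<lambda>i. - A i) ` I))"
    by auto
  have "int (card (W \<inter> \<Inter>((\<lambda>i. - A i) ` insert i I))) = int (card (W \<inter> \<Inter>((\<lambda>i. - A i) ` I))) - int (card ((W \<inter> A i) \<inter> \<Inter>((\<lambda>i. - A i) ` I)))"
  proof -
    let ?X = "W \<inter> \<Inter>((\<lambda>i. - A i) ` I)" and ?Y = "(W \<inter> A i) \<inter> \<Inter>((\<lambda>i. - A i) ` I)"
    have s: "?Y \<subseteq> ?X" by auto
    have f: "finite ?X" "finite ?Y" using insert.prems by auto
    have c: "card ?Y \<le> card ?X" using card_mono[OF f(1) s] .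
    show ?thesis unfolding e1 card_Diff_subset[OF f(2) s] using c by (simp add: of_nat_diff)
  qed
  also have "\<dots> = (\<Sum>K\<in>Pow I. (-1) ^ card K * int (card (W \<inter> \<Inter>(A ` K)))) - (\<Sum>K\<in>Pow I. (-1) ^ card K * int (card ((W \<inter> A i) \<inter> \<Inter>(A ` K))))"
    using insert by simp
  also have "\<dots> = (\<Sum>K\<in>Pow (insert i I). (-1) ^ card K * int (card (W \<inter> \<Inter>(A ` K))))"
  proof -
    have inj: "inj_on (insert i) (Pow I)" using insert.hyps unfolding inj_on_def by (metis Diff_insert_absorb PowD subsetD)
    have dis: "Pow I \<inter> insert i ` Pow I = {}" using insert.hyps by auto
    have "(\<Sum>K\<in>Pow (insert i I). (-1) ^ card K * int (card (W \<inter> \<Inter>(A ` K)))) =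
      (\<Sum>K\<in>Pow I. (-1) ^ card K * int (card (W \<inter> \<Inter>(A ` K)))) + (\<Sum>K\<in>insert i ` Pow I. (-1) ^ card K * int (card (W \<inter> \<Inter>(A ` K))))"
      unfolding Pow_insert using insert.hyps dis by (subst sum.union_disjoint) auto
    also have "(\<Sum>K\<in>insert i ` Pow I. (-1) ^ card K * int (card (W \<inter> \<Inter>(A ` K)))) = 
       (\<Sum>K\<in>Pow I. (-1) ^ card (insert i K) * int (card (W \<inter> \<Inter>(A ` insert i K))))"
      by (simp only: sum.reindex[OF inj] o_def)
    also have "\<dots> = - (\<Sum>K\<in>Pow I. (-1) ^ card K * int (card ((W \<inter> A i) \<inter> \<Inter>(A ` K))))"
      unfolding sum_negf[symmetric]
    proof (rule sum.cong[OF refl])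
      fix K assume "K \<in> Pow I"
      then have "finite K" "i \<notin> K" using insert.hyps finite_subset by auto
      moreover have "W \<inter> \<Inter>(A ` insert i K) = (W \<inter> A i) \<inter> \<Inter>(A ` K)" by auto
      ultimately show "(-1) ^ card (insert i K) * int (card (W \<inter> \<Inter>(A ` insert i K))) = - ((-1) ^ card K * int (card ((W \<inter> A i) \<inter> \<Inter>(A ` K))))"
        by simp
    qed
    finally show ?thesis by simp
  qed
  finally show ?case .
qed


lemma mset_bij:
  assumes "finite X" "finite Y" "image_mset h (mset_set X) = image_mset h (mset_set Y)"
  shows "\<exists>g. bij_betw g X Y \<and> (\<forall>x\<in>X. h (g x) = h x)"
  using assms
proof (induction X arbitrary: Y rule: finite_induct)
  case empty
  then have "image_mset h (mset_set Y) = {#}" by simp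
  then have "mset_set Y = {#}" by simp
  then have "Y = {}" using empty.prems(1) by (metis finite_set_mset_mset_set set_mset_empty)
  then show ?case by (auto simp: bij_betw_def)
next
  case (insert x X)
  have "image_mset h (mset_set Y) = add_mset (h x) (image_mset h (mset_set X))" using insert.prems(2) insert.hyps by simp
  then have "h x \<in># image_mset h (mset_set Y)" by simp
  then obtain y where y: "y \<in> Y" "h y = h x" using insert.prems(1) by auto
  have "mset_set Y = add_mset y (mset_set (Y - {y}))" using mset_set.remove[OF insert.prems(1) y(1)] .
  then have "image_mset h (mset_set X) = image_mset h (mset_set (Y - {y}))"
    using insert.prems(2) insert.hyps y(2) by simp
  then obtain g where g: "bij_betw g X (Y - {y})" "\<forall>x\<in>X. h (g x) = h x"
    using insert.IH[of "Y - {y}"] insert.prems(1) by auto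
  have g2: "bij_betw (g(x := y)) X (Y - {y})"
    using g(1) insert.hyps by (subst bij_betw_cong[of _ _ g]) auto
  have "bij_betw (g(x := y)) (X \<union> {x}) ((Y - {y}) \<union> {(g(x := y)) x})"
    using notIn_Un_bij_betw3[of x X "g(x := y)" "Y - {y}"] g2 insert.hyps by simp
  moreover have "(Y - {y}) \<union> {(g(x := y)) x} = Y" using y by auto
  ultimately have "bij_betw (g(x := y)) (insert x X) Y" by simp
  moreover have "\<forall>z\<in>insert x X. h ((g(x := y)) z) = h z" using g(2) y(2) insert.hyps by auto
  ultimately show ?case by blast
qed

lemma shift_pt:
  assumes "\<forall>x\<in>K. \<forall>y\<in>K. y = Suc x \<longleftrightarrow> f y = Suc (f x)"
  shows "{a..a+n} \<subseteq> K \<Longrightarrow> f (a + n) = f a + n"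
proof (induction n)
  case 0 then show ?case by simp
next
  case (Suc n)
  have "{a..a+n} \<subseteq> K" using Suc.prems by auto
  then have "f (a + n) = f a + n" using Suc.IH by blast
  moreover have "a + n \<in> K" "Suc (a + n) \<in> K" using Suc.prems by auto
  moreover have "f (Suc (a+n)) = Suc (f (a+n))" using assms \<open>a + n \<in> K\<close> \<open>Suc (a + n) \<in> K\<close> by blast
  ultimately show ?case by simp
qed

lemma shift_img:
  assumes "\<forall>x\<in>K. \<forall>y\<in>K. y = Suc x \<longleftrightarrow> f y = Suc (f x)" "{a..b} \<subseteq> K" "a \<le> b"
  shows "f ` {a..b} = {f a..f b}"
proof -
  have pt: "f k = f a + (k - a)" if "k \<in> {a..b}" for k
  proof -
    have "{a..a + (k - a)} \<subseteq> K" using that assms(2) by auto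
    then have "f (a + (k - a)) = f a + (k - a)" by (rule shift_pt[OF assms(1)])
    then show ?thesis using that by simp
  qed
  have fb: "f b = f a + (b - a)" using pt[of b] assms(3) by simp
  show ?thesis
  proof
    show "f ` {a..b} \<subseteq> {f a..f b}"
    proof (rule image_subsetI)
      fix k assume k: "k \<in> {a..b}"
      have "k - a \<le> b - a" using k by auto
      then show "f k \<in> {f a..f b}" unfolding pt[OF k] fb by simp
    qed
    show "{f a..f b} \<subseteq> f ` {a..b}"
    proof
      fix z assume z: "z \<in> {f a..f b}"
      have m: "a + (z - f a) \<in> {a..b}" using z fb assms(3) by auto
      have "f (a + (z - f a)) = z" using pt[OF m] z by simp
      then show "z \<in> f ` {a..b}" using m by (metis image_eqI)
    qed
  qed
qed

lemma run_decomp_image: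
  assumes fin: "finite K" and z: "0 \<notin> K" "0 \<notin> f ` K" and inj: "inj_on f K"
    and sc: "\<forall>x\<in>K. \<forall>y\<in>K. y = Suc x \<longleftrightarrow> f y = Suc (f x)"
  shows "run_decomp (f ` K) = run_decomp K"
proof -
  have sup: "f ` R \<in> runs (f ` K)" if R: "R \<in> runs K" for R
  proof -
    obtain a b where ab: "R = {a..b}" "1 \<le> a" "a \<le> b" "{a..b} \<subseteq> K" "a - 1 \<notin> K" "b + 1 \<notin> K"
      using R by (auto simp: runs_mem)
    have img: "f ` R = {f a..f b}" using shift_img[OF sc ab(4) ab(3)] ab(1) by simp
    have aK: "a \<in> K" "b \<in> K" using ab by auto
    have "f a \<noteq> 0" using z(2) aK by force
    then have fa1: "1 \<le> f a" by simp
    have "f a \<in> f ` R" using ab by auto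
    then have fab: "f a \<le> f b" using img by simp
    have n1: "f a - 1 \<notin> f ` K"
    proof
      assume "f a - 1 \<in> f ` K"
      then obtain y where y: "y \<in> K" "f a - 1 = f y" by auto
      then have "f a = Suc (f y)" using fa1 by simp
      then have "a = Suc y" using sc y(1) aK(1) by blast
      then show False using ab(5) y(1) by simp
    qed
    have n2: "f b + 1 \<notin> f ` K"
    proof
      assume "f b + 1 \<in> f ` K"
      then obtain y where y: "y \<in> K" "f b + 1 = f y" by auto
      then have "y = Suc b" using sc aK(2) by simp
      then show False using ab(6) y(1) by simp
    qed
    have "{f a..f b} \<subseteq> f ` K" using img ab(1,4) by auto
    then show ?thesis unfolding runs_mem using img fa1 fab n1 n2 by (intro exI[of _ "f a"] exI[of _ "f b"]) simp
  qed
  have eq: "runs (f ` K) = (\<lambda>R. f ` R) ` runs K"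
  proof
    show "(\<lambda>R. f ` R) ` runs K \<subseteq> runs (f ` K)" using sup by auto
    show "runs (f ` K) \<subseteq> (\<lambda>R. f ` R) ` runs K"
    proof
      fix S assume S: "S \<in> runs (f ` K)"
      then obtain c d where "S = {c..d}" "c \<le> d" by (auto simp: runs_mem)
      then have cS: "c \<in> S" by simp
      then have "c \<in> f ` K" using runs_sub[OF S] by auto
      then obtain x where x: "x \<in> K" "c = f x" by auto
      have R: "run_of K x \<in> runs K" "x \<in> run_of K x" using run_of_in[OF fin x(1) z(1)] by auto
      have "f ` run_of K x = S" using runs_unique[OF sup[OF R(1)] S, of c] R(2) x(2) cS by auto
      then show "S \<in> (\<lambda>R. f ` R) ` runs K" using R(1) by blast
    qed
  qed
  have injR: "inj_on (\<lambda>R. f ` R) (runs K)"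
    by (rule inj_on_subset[OF inj_on_image_Pow[OF inj]]) (auto dest: runs_sub)
  have "run_decomp (f ` K) = image_mset card (image_mset (\<lambda>R. f ` R) (mset_set (runs K)))"
    unfolding run_decomp_def eq image_mset_mset_set[OF injR] ..
  also have "\<dots> = image_mset (\<lambda>R. card (f ` R)) (mset_set (runs K))"
    by (simp add: multiset.map_comp o_def)
  also have "\<dots> = image_mset card (mset_set (runs K))"
  proof (rule image_mset_cong)
    fix R assume "R \<in># mset_set (runs K)"
    then have "R \<subseteq> K" using runs_finite[OF fin] runs_sub by auto
    then show "card (f ` R) = card R" using inj by (meson card_image inj_on_subset)
  qed
  finally show ?thesis unfolding run_decomp_def .
qed


lemma Min_ival[simp]: "(c::nat) \<le> d \<Longrightarrow> Min {c..d} = c"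
  by (rule Min_eqI) auto

lemma run_bij:
  assumes fI: "finite I" "finite J" "0 \<notin> I" "0 \<notin> J" "run_decomp I = run_decomp J"
  shows "\<exists>f. bij_betw f I J \<and> (\<forall>x\<in>I. \<forall>y\<in>I. y = Suc x \<longleftrightarrow> f y = Suc (f x))"
proof -
  obtain g where g: "bij_betw g (runs I) (runs J)" "\<forall>R\<in>runs I. card (g R) = card R"
    using mset_bij[OF runs_finite[OF fI(1)] runs_finite[OF fI(2)], of card] fI(5) unfolding run_decomp_def by blast
  define f where "f x = Min (g (run_of I x)) + (x - Min (run_of I x))" for x
  have RI: "run_of I x \<in> runs I" "x \<in> run_of I x" if "x \<in> I" for x using run_of_in[OF fI(1) that fI(3)] by auto
  have gR: "g R \<in> runs J" if "R \<in> runs I" for R using g(1) that by (auto simp: bij_betw_def)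
  have key: "f x \<in> g (run_of I x)" if x: "x \<in> I" for x
  proof -
    let ?R = "run_of I x"
    obtain a b where ab: "?R = {a..b}" "a \<le> b" using RI[OF x] by (auto simp: runs_mem)
    obtain c d where cd: "g ?R = {c..d}" "c \<le> d" using gR[OF RI(1)[OF x]] by (auto simp: runs_mem)
    have "card (g ?R) = card ?R" using g(2) RI[OF x] by simp
    then have "Suc d - c = Suc b - a" using ab cd by simp
    moreover have "a \<le> x" "x \<le> b" using RI(2)[OF x] ab by auto
    ultimately show ?thesis unfolding f_def using ab cd by auto
  qed
  have runJ: "run_of J (f x) = g (run_of I x)" if "x \<in> I" for x
    using run_of_eq[OF gR[OF RI(1)[OF that]] key[OF that]] .
  have fJ: "f x \<in> J" if "x \<in> I" for x using runs_sub[OF gR[OF RI(1)[OF that]]] key[OF that] by auto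
  have minle: "Min (run_of I x) \<le> x" if x: "x \<in> I" for x
  proof -
    obtain a b where ab: "run_of I x = {a..b}" "a \<le> b" using RI[OF x] by (auto simp: runs_mem)
    then show ?thesis using RI(2)[OF x] by auto
  qed
  have ginj: "inj_on g (runs I)" using g(1) by (auto simp: bij_betw_def)
  have sameR: "run_of I x = run_of I y" if x: "x \<in> I" and y: "y \<in> I" and e: "run_of J (f x) = run_of J (f y)" for x y
  proof -
    have "g (run_of I x) = g (run_of I y)" using e runJ[OF x] runJ[OF y] by simp
    then show ?thesis using inj_onD[OF ginj _ RI(1)[OF x] RI(1)[OF y]] by blast
  qed
  have inj: "inj_on f I"
  proof (rule inj_onI)
    fix x y assume xy: "x \<in> I" "y \<in> I" "f x = f y"
    then have "run_of I x = run_of I y" using sameR[OF xy(1) xy(2)] by simp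
    then show "x = y" using xy minle[OF xy(1)] minle[OF xy(2)] unfolding f_def by simp
  qed
  have surj: "f ` I = J"
  proof
    show "f ` I \<subseteq> J" using fJ by auto
    show "J \<subseteq> f ` I"
    proof
      fix z assume z: "z \<in> J"
      have S: "run_of J z \<in> runs J" "z \<in> run_of J z" using run_of_in[OF fI(2) z fI(4)] by auto
      have "run_of J z \<in> g ` runs I" using g(1) S(1) by (simp add: bij_betw_def)
      then obtain R where R: "R \<in> runs I" "g R = run_of J z" by (auto simp del: Min_ival)
      obtain a b where ab: "R = {a..b}" "a \<le> b" using R by (auto simp: runs_mem)
      obtain c d where cd: "g R = {c..d}" "c \<le> d" using gR[OF R(1)] by (auto simp: runs_mem)
      have "card (g R) = card R" using g(2) R(1) by blast
      then have cc: "Suc d - c = Suc b - a" using ab cd by simp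
      have zc: "c \<le> z" "z \<le> d" using S(2) R(2) cd by auto
      define x where "x = a + (z - c)"
      have xR: "x \<in> R" using ab cd cc zc unfolding x_def by auto
      have xI: "x \<in> I" using xR runs_sub[OF R(1)] by auto
      have "run_of I x = R" using run_of_eq[OF R(1) xR] .
      then have "f x = z" unfolding f_def x_def using ab cd zc by simp
      then show "z \<in> f ` I" using xI by blast
    qed
  qed
  have sc: "\<forall>x\<in>I. \<forall>y\<in>I. y = Suc x \<longleftrightarrow> f y = Suc (f x)"
  proof (intro ballI iffI)
    fix x y assume xy: "x \<in> I" "y \<in> I"
    {
      assume "y = Suc x"
      then have "y \<in> run_of I x" using runs_suc[OF RI[OF xy(1)]] xy by simp
      then have "run_of I y = run_of I x" using run_of_eq[OF RI(1)[OF xy(1)]] by simp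
      then show "f y = Suc (f x)" unfolding f_def using \<open>y = Suc x\<close> minle[OF xy(1)] by simp
    }
    {
      assume e: "f y = Suc (f x)"
      have "f y \<in> run_of J (f x)"
        using runs_suc[OF run_of_in[OF fI(2) fJ[OF xy(1)] fI(4)]] fJ[OF xy(2)] e by simp
      then have "run_of J (f y) = run_of J (f x)"
        using run_of_eq[OF run_of_in(1)[OF fI(2) fJ[OF xy(1)] fI(4)]] by simp
      then have "run_of I x = run_of I y" using sameR[OF xy(1) xy(2)] by simp
      then show "y = Suc x" using e minle[OF xy(1)] minle[OF xy(2)] unfolding f_def by simp
    }
  qed
  show ?thesis using inj surj sc by (auto simp: bij_betw_def)
qed

lemma H_compl:
  "H_int U (complement_system U A) I = U \<inter> \<Inter>((\<lambda>i. - A i) ` I)"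
  by (auto simp: H_int_def complement_system_def)

lemma H_A:
  assumes "\<forall>i\<in>{1..m}. A i \<subseteq> U" "K \<subseteq> {1..m}"
  shows "H_int U A K = U \<inter> \<Inter>(A ` K)"
  using assms by (auto simp: H_int_def)

lemma harm_compl:
  fixes U :: "'a set" and A :: "nat \<Rightarrow> 'a set"
  assumes fU: "finite U" and AU: "\<forall>i\<in>{1..m}. A i \<subseteq> U" and h: "harmonic U m A"
  shows "harmonic U m (complement_system U A)"
  unfolding harmonic_def
proof (intro allI impI)
  fix I J assume I: "I \<subseteq> {1..m}" and J: "J \<subseteq> {1..m}" and rd: "run_decomp I = run_decomp J"
  have fin: "finite I" "finite J" using I J finite_subset by auto
  have z: "0 \<notin> I" "0 \<notin> J" using I J by auto
  obtain f where f: "bij_betw f I J" "\<forall>x\<in>I. \<forall>y\<in>I. y = Suc x \<longleftrightarrow> f y = Suc (f x)"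
    using run_bij[OF fin z rd] by blast
  define F where "F K = (-1::int) ^ card K * int (card (H_int U A K))" for K
  have HB: "int (card (H_int U (complement_system U A) L)) = (\<Sum>K\<in>Pow L. F K)" if L: "L \<subseteq> {1..m}" for L
  proof -
    have "finite L" using L finite_subset by auto
    have "int (card (H_int U (complement_system U A) L)) = (\<Sum>K\<in>Pow L. (-1) ^ card K * int (card (U \<inter> \<Inter>(A ` K))))"
      unfolding H_compl by (rule IE[OF \<open>finite L\<close> fU])
    also have "\<dots> = (\<Sum>K\<in>Pow L. F K)"
      unfolding F_def
    proof (intro sum.cong refl)
      fix K assume "K \<in> Pow L"
      then have "K \<subseteq> {1..m}" using L by auto
      then show "(-1) ^ card K * int (card (U \<inter> \<Inter>(A ` K))) = (-1) ^ card K * int (card (H_int U A K))"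
        using H_A[OF AU] by simp
    qed
    finally show ?thesis .
  qed
  have "(\<Sum>K\<in>Pow J. F K) = (\<Sum>K\<in>Pow I. F (f ` K))"
    by (rule sum.reindex_bij_betw[OF bij_betw_image_Pow[OF f(1)], symmetric])
  also have "\<dots> = (\<Sum>K\<in>Pow I. F K)"
  proof (rule sum.cong[OF refl])
    fix K assume K: "K \<in> Pow I"
    have injK: "inj_on f K" using f(1) K by (auto simp: bij_betw_def intro: inj_on_subset)
    have fK: "f ` K \<subseteq> J" using f(1) K by (auto simp: bij_betw_def)
    have "run_decomp (f ` K) = run_decomp K"
    proof (rule run_decomp_image)
      show "finite K" using K fin(1) finite_subset by blast
      show "0 \<notin> K" using K z(1) by blast
      show "0 \<notin> f ` K" using fK z(2) by blast
      show "inj_on f K" by (rule injK)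
      show "\<forall>x\<in>K. \<forall>y\<in>K. y = Suc x \<longleftrightarrow> f y = Suc (f x)" using f(2) K by blast
    qed
    then have "card (H_int U A (f ` K)) = card (H_int U A K)"
    proof -
      have "K \<subseteq> {1..m}" "f ` K \<subseteq> {1..m}" using K I fK J by auto
      then show ?thesis using h[unfolded harmonic_def, rule_format, of "f ` K" K] \<open>run_decomp (f ` K) = run_decomp K\<close> by blast
    qed
    moreover have "card (f ` K) = card K" using injK by (simp add: card_image)
    ultimately show "F (f ` K) = F K" unfolding F_def by simp
  qed
  finally have "int (card (H_int U (complement_system U A) I)) = int (card (H_int U (complement_system U A) J))"
    using HB[OF I] HB[OF J] by simp
  then show "card (H_int U (complement_system U A) I) = card (H_int U (complement_system U A) J)" by simp
qed

theorem corollary3p23: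
  fixes U :: "'a set" and m :: nat and A :: "nat \<Rightarrow> 'a set"
  assumes "finite U" and "\<forall>i\<in>{1..m}. A i \<subseteq> U"
  shows "harmonic U m A \<longleftrightarrow> harmonic U m (complement_system U A)"
proof
  assume "harmonic U m A"
  then show "harmonic U m (complement_system U A)" using harm_compl assms by blast
next
  assume h: "harmonic U m (complement_system U A)"
  have "harmonic U m (complement_system U (complement_system U A))"
    by (rule harm_compl[OF assms(1) _ h]) (auto simp: complement_system_def)
  moreover have "H_int U (complement_system U (complement_system U A)) I = H_int U A I" if "I \<subseteq> {1..m}" for I
    using that assms(2) by (auto simp: H_int_def complement_system_def)
  ultimately show "harmonic U m A" unfolding harmonic_def
  proof (intro allI impI)
    fix I J assume h2: "\<forall>I J. I \<subseteq> {1..m} \<longrightarrow> J \<subseteq> {1..m} \<longrightarrow> run_decomp I = run_decomp J \<longrightarrow>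
        card (H_int U (complement_system U (complement_system U A)) I) = card (H_int U (complement_system U (complement_system U A)) J)"
      and e: "\<And>I. I \<subseteq> {1..m} \<Longrightarrow> H_int U (complement_system U (complement_system U A)) I = H_int U A I"
      and I: "I \<subseteq> {1..m}" and J: "J \<subseteq> {1..m}" and rd: "run_decomp I = run_decomp J"
    show "card (H_int U A I) = card (H_int U A J)" using h2[rule_format, OF I J rd] e[OF I] e[OF J] by simp
  qed
qed


end
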